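(* Let $k\ge 2$ and let $\mathcal H$ be a 3-uniform hypergraph on vertex set $V$ with no Berge cycle of length $2k+1$. Let $V=V_1\cup V_2$ be a partition. Let $\mathcal H_4$ be a set of hyperedges of $\mathcal H$ such that each $E\in\mathcal H_4$ has the form $E=\{u,v,w\}$ where, for some $i\in\{1,2\}$, $u,v\in V_i$, $w\in V_{3-i}$, the pair $\{u,v\}$ is contained in no hyperedge of $\mathcal H$ other than $E$, and $\max(\deg_{\mathcal H}(w,u),\deg_{\mathcal H}(w,v))\ge 3$. Let $G_4$ be the graph with edge set $\{E\cap V_i : E\in\mathcal H_4\}$ (i.e. the pairs $\{u,v\}$ above). Then $G_4$ contains no cycle of length $2k$; consequently $|\mathcal H_4|\le \mathrm{ex}(n,C_{2k})$ where $n=|V|$.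
   Context: $\deg_{\mathcal H}(u,v)$ is the number of hyperedges of $\mathcal H$ containing both $u$ and $v$. A Berge cycle of length $m$ is a family of $m$ distinct hyperedges $H_0,\dots,H_{m-1}$ for which there exist distinct vertices $v_0,\dots,v_{m-1}$ with $\{v_i,v_{i+1}\}\subset H_i$ (indices mod $m$). $\mathrm{ex}(n,C_{2k})$ is the maximum number of edges of a simple graph on $n$ vertices with no cycle of length $2k$. *)

theory Defs
  imports Main
begin

definition uniform3_hypergraph :: "'a set \<Rightarrow> 'a set set \<Rightarrow> bool" where
  "uniform3_hypergraph V H \<longleftrightarrow> finite V \<and> (\<forall>E\<in>H. E \<subseteq> V \<and> card E = 3)"

definition codeg :: "'a set set \<Rightarrow> 'a \<Rightarrow> 'a \<Rightarrow> nat" where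
  "codeg H u v = card {E\<in>H. u \<in> E \<and> v \<in> E}"

definition has_berge_cycle :: "'a set set \<Rightarrow> nat \<Rightarrow> bool" where
  "has_berge_cycle H m \<longleftrightarrow> (\<exists>(Es :: nat \<Rightarrow> 'a set) (vs :: nat \<Rightarrow> 'a).
      inj_on Es {..<m} \<and> inj_on vs {..<m} \<and>
      (\<forall>i<m. Es i \<in> H \<and> vs i \<in> Es i \<and> vs ((i + 1) mod m) \<in> Es i))"

definition has_cycle :: "'a set set \<Rightarrow> nat \<Rightarrow> bool" where
  "has_cycle G m \<longleftrightarrow> 3 \<le> m \<and> (\<exists>vs :: nat \<Rightarrow> 'a.
      inj_on vs {..<m} \<and> (\<forall>i<m. {vs i, vs ((i + 1) mod m)} \<in> G))"

definition simple_graphs_on :: "nat \<Rightarrow> nat set set set" where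
  "simple_graphs_on n = {G. \<forall>e\<in>G. e \<subseteq> {..<n} \<and> card e = 2}"

definition ex_cycle :: "nat \<Rightarrow> nat \<Rightarrow> nat" where
  "ex_cycle n m = Max (card ` {G \<in> simple_graphs_on n. \<not> has_cycle G m})"

end

theory Submission
  imports Defs
begin

lemma nx_eq: "(i::nat) < m \<Longrightarrow> (i+1) mod m = (if i+1 = m then 0 else i+1)"
  by auto

lemma inj_ins1:
  assumes inj: "inj_on f {..<m}" and a: "a \<notin> f ` {..<m}" and m0: "0 < m"
  shows "inj_on (\<lambda>j. if j=0 then f 0 else if j=1 then a else f (j-1)) {..<Suc m}"
proof (rule inj_onI)
  fix i j assume i: "i \<in> {..<Suc m}" and j: "j \<in> {..<Suc m}"
    and eq: "(if i=0 then f 0 else if i=1 then a else f (i-1)) = (if j=0 then f 0 else if j=1 then a else f (j-1))"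
  define h where "h j = (if j = 0 then 0 else j - 1)" for j :: nat
  have g: "(if j=0 then f 0 else if j=1 then a else f (j-1)) = (if j = 1 then a else f (h j))" for j
    unfolding h_def by simp
  have hl: "j \<noteq> 1 \<Longrightarrow> j < Suc m \<Longrightarrow> h j < m" for j unfolding h_def using m0 by auto
  have hi: "h i = h j \<Longrightarrow> i \<noteq> 1 \<Longrightarrow> j \<noteq> 1 \<Longrightarrow> i = j" unfolding h_def by (auto split: if_splits)
  have eq': "(if i=1 then a else f (h i)) = (if j=1 then a else f (h j))" using eq by (simp only: g)
  show "i = j"
  proof (cases "i = 1")
    case True
    show ?thesis
    proof (rule ccontr)
      assume "i \<noteq> j"
      then have "a = f (h j)" using eq' True by simp
      then show False using a hl j True \<open>i \<noteq> j\<close> by auto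
    qed
  next
    case False
    show ?thesis
    proof (cases "j = 1")
      case True
      then have "a = f (h i)" using eq' False by simp
      then show ?thesis using a hl i False by auto
    next
      case False2: False
      then have "f (h i) = f (h j)" using eq' False by simp
      moreover have "h i \<in> {..<m}" "h j \<in> {..<m}" using hl i j False False2 by auto
      ultimately have "h i = h j" using inj_onD[OF inj] by blast
      then show ?thesis using hi False False2 by simp
    qed
  qed
qed

lemma core:
  fixes A B V :: "'a set" and H H4 :: "'a set set" and vs :: "nat \<Rightarrow> 'a" and k :: nat
  assumes k2: "2 \<le> k" and U: "uniform3_hypergraph V H"
    and NB: "\<not> has_berge_cycle H (2*k+1)"
    and D: "A \<inter> B = {}" and H4H: "H4 \<subseteq> H"
    and hyp: "\<forall>E\<in>H4. \<exists>u v w. E = {u,v,w} \<and> ((u\<in>A \<and> v\<in>A \<and> w\<in>B) \<or> (u\<in>B \<and> v\<in>B \<and> w\<in>A))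
       \<and> {E'\<in>H. u\<in>E' \<and> v\<in>E'} = {E} \<and> max (codeg H w u) (codeg H w v) \<ge> 3"
    and inj0: "inj_on vs {..<2*k}"
    and cyc: "\<forall>i<2*k. {vs i, vs ((i+1) mod (2*k))} \<in> {e. \<exists>E\<in>H4. (e = E\<inter>A \<or> e = E\<inter>B) \<and> card e = 2}"
    and v0: "vs 0 \<in> A"
  shows False
proof -
  define m where "m = 2*k"
  have m4: "4 \<le> m" using k2 m_def by simp
  have inj: "inj_on vs {..<m}" using inj0 m_def by simp
  define nx where "nx i = (i+1) mod m" for i
  have nxe: "nx i = (if i+1 = m then 0 else i+1)" if "i<m" for i using that nx_def by auto
  have nxlt: "nx i < m" for i using nx_def m4 by simp
  have cyc': "\<forall>i<m. \<exists>E\<in>H4. ({vs i, vs (nx i)} = E\<inter>A \<or> {vs i, vs (nx i)} = E\<inter>B) \<and> card {vs i, vs (nx i)} = 2"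
    using cyc m_def nx_def by auto
  have inA: "vs i \<in> A" if "i < m" for i
    using that
  proof (induction i)
    case 0 show ?case using v0 .
  next
    case (Suc i)
    then have i: "i < m" by simp
    have vi: "vs i \<in> A" using Suc i by simp
    from cyc' i obtain E where E: "E\<in>H4" "{vs i, vs (nx i)} = E\<inter>A \<or> {vs i, vs (nx i)} = E\<inter>B" by blast
    have "nx i = Suc i" using nxe[OF i] Suc.prems by simp
    have "{vs i, vs (nx i)} \<noteq> E\<inter>B" using vi D by blast
    then have "{vs i, vs (nx i)} = E\<inter>A" using E(2) by blast
    then have "vs (nx i) \<in> A" by blast
    then show ?case using \<open>nx i = Suc i\<close> by simp
  qed
  have card3: "\<forall>E\<in>H. card E = 3" using U unfolding uniform3_hypergraph_def by blast
  have info: "\<exists>E w. E \<in> H4 \<and> E = {vs i, vs (nx i), w} \<and> w \<in> B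
      \<and> 3 \<le> max (codeg H w (vs i)) (codeg H w (vs (nx i)))" if i: "i<m" for i
  proof -
    have a: "vs i \<in> A" "vs (nx i) \<in> A" using inA i nxlt by auto
    from cyc' i obtain E where E: "E\<in>H4" "{vs i, vs (nx i)} = E\<inter>A \<or> {vs i, vs (nx i)} = E\<inter>B"
        "card {vs i, vs (nx i)} = 2" by blast
    have "{vs i, vs (nx i)} \<noteq> E\<inter>B" using a D by blast
    then have eA: "{vs i, vs (nx i)} = E\<inter>A" using E(2) by blast
    from bspec[OF hyp E(1)] obtain u v w where uvw: "E = {u,v,w}" "((u\<in>A \<and> v\<in>A \<and> w\<in>B) \<or> (u\<in>B \<and> v\<in>B \<and> w\<in>A))"
       "{E'\<in>H. u\<in>E' \<and> v\<in>E'} = {E}" "max (codeg H w u) (codeg H w v) \<ge> 3" by iprover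
    show ?thesis
    proof (cases "u\<in>A \<and> v\<in>A \<and> w\<in>B")
      case True
      then have "E\<inter>A = {u,v}" using uvw(1) D by auto
      with eA have "{vs i, vs (nx i)} = {u,v}" by simp
      then have "(vs i = u \<and> vs (nx i) = v) \<or> (vs i = v \<and> vs (nx i) = u)" by (simp add: doubleton_eq_iff)
      then show ?thesis
      proof
        assume h: "vs i = u \<and> vs (nx i) = v"
        show ?thesis using h uvw(1,4) True E(1) by (intro exI[of _ E] exI[of _ w]) simp
      next
        assume h: "vs i = v \<and> vs (nx i) = u"
        have "E = {v,u,w}" using uvw(1) by (simp add: insert_commute)
        moreover have "3 \<le> max (codeg H w v) (codeg H w u)" using uvw(4) by (simp add: max.commute)
        ultimately show ?thesis using h True E(1) by (intro exI[of _ E] exI[of _ w]) simp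
      qed
    next
      case False
      then have "u\<in>B \<and> v\<in>B \<and> w\<in>A" using uvw(2) by blast
      then have "E\<inter>A = {w}" using uvw(1) D by auto
      then have "card {vs i, vs (nx i)} = 1" using eA by simp
      with E(3) show ?thesis by simp
    qed
  qed
  then obtain Ef wf where EF: "\<forall>i<m. Ef i \<in> H4 \<and> Ef i = {vs i, vs (nx i), wf i} \<and> wf i \<in> B
     \<and> 3 \<le> max (codeg H (wf i) (vs i)) (codeg H (wf i) (vs (nx i)))"
    by metis
  note EFi = EF[rule_format]
  have E1: "Ef i \<in> H4" if "i<m" for i using EFi[OF that] by (elim conjE) assumption
  have E2: "Ef i = {vs i, vs (nx i), wf i}" if "i<m" for i using EFi[OF that] by (elim conjE) assumption
  have E3: "wf i \<in> B" if "i<m" for i using EFi[OF that] by (elim conjE) assumption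
  have E4: "3 \<le> max (codeg H (wf i) (vs i)) (codeg H (wf i) (vs (nx i)))" if "i<m" for i
    using EFi[OF that] by (elim conjE) assumption
  have DD: "x \<notin> B" if "x \<in> A" for x using D that by blast
  have notw: "vs i \<noteq> wf j" if "i<m" "j<m" for i j using DD[OF inA[OF that(1)]] E3[OF that(2)] by metis
  have injv: "i = j" if "vs i = vs j" "i<m" "j<m" for i j using inj_onD[OF inj that(1)] that by simp
  have injE: "inj_on Ef {..<m}"
  proof (rule inj_onI)
    fix i j assume i: "i\<in>{..<m}" and j: "j\<in>{..<m}" and eq: "Ef i = Ef j"
    have il: "i<m" and jl: "j<m" using i j by auto
    have "vs j \<in> Ef j" "vs (nx j) \<in> Ef j" using E2[OF jl] by auto
    then have "vs j \<in> Ef i" "vs (nx j) \<in> Ef i" using eq by auto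
    then have "vs j \<in> {vs i, vs (nx i), wf i}" "vs (nx j) \<in> {vs i, vs (nx i), wf i}" using E2[OF il] by auto
    then have 1: "vs j \<in> {vs i, vs (nx i)}" and 2: "vs (nx j) \<in> {vs i, vs (nx i)}" using notw[OF nxlt il] notw[OF jl il] by auto
    have a: "j = i \<or> j = nx i" using 1 injv il jl nxlt by auto
    have b: "nx j = i \<or> nx j = nx i" using 2 injv il jl nxlt by auto
    show "i = j" using a b nxe[OF il] nxe[OF jl] m4 by (auto split: if_splits)
  qed
  have injE': "i = j" if "Ef i = Ef j" "i<m" "j<m" for i j using inj_onD[OF injE that(1)] that by simp
  have EfEq: "(Ef i = Ef j) = (i = j)" if "i<m" "j<m" for i j using injE' that by blast
  have vsEq: "(vs i = vs j) = (i = j)" if "i<m" "j<m" for i j using injv that by blast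
  define w where "w = wf 0"
  have m0: "0 < m" using m4 by simp
  have nx0: "nx 0 = 1" using nxe[OF m0] m4 by simp
  have wB: "w \<in> B" using E3[OF m0] w_def by simp
  have wE0: "w \<in> Ef 0" using E2[OF m0] w_def by simp
  have wnv: "w \<noteq> vs i" if "i < m" for i using notw[OF that m0] w_def by simp
  have vin: "vs i \<in> Ef i" "vs (nx i) \<in> Ef i" "Ef i \<in> H" if "i<m" for i
    using E2[OF that] E1[OF that] H4H by auto
  have cd: "3 \<le> codeg H w (vs 0) \<or> 3 \<le> codeg H w (vs 1)" using E4[OF m0] w_def nx0 by (auto simp: max_def split: if_splits)
  have "has_berge_cycle H (Suc m)"
    using cd
  proof
    assume c: "3 \<le> codeg H w (vs 0)"
    define S where "S = {E\<in>H. w\<in>E \<and> vs 0 \<in> E}"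
    have cS: "3 \<le> card S" using c unfolding S_def codeg_def by simp
    have sub: "\<And>j. j < m \<Longrightarrow> Ef j \<in> S \<Longrightarrow> j = 0 \<or> j = m - 1"
    proof -
      fix j assume j: "j<m" and "Ef j \<in> S"
      then have "vs 0 \<in> {vs j, vs (nx j), wf j}" using E2[OF j] S_def by auto
      then have "vs 0 = vs j \<or> vs 0 = vs (nx j)" using notw[OF m0 j] by auto
      then have "j = 0 \<or> nx j = 0" using injv j m0 nxlt by metis
      then show "j = 0 \<or> j = m - 1" using nxe[OF j] by (auto split: if_splits)
    qed
    obtain F where F: "F \<in> S" "F \<notin> Ef ` {..<m}"
    proof (rule ccontr)
      assume "\<not> thesis"
      then have "S \<subseteq> {Ef 0, Ef (m-1)}" using sub that by blast
      then have "card S \<le> card {Ef 0, Ef (m-1)}" by (intro card_mono) auto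
      also have "\<dots> \<le> 2" by (auto simp: card_insert_if)
      finally show False using cS by simp
    qed
    have FH: "F \<in> H" "w \<in> F" "vs 0 \<in> F" using F S_def by auto
    have Fne: "Ef j \<noteq> F" if "j<m" for j using F(2) that by auto
    have modm: "i mod m = (if i = m then 0 else i)" if "1 \<le> i" "i \<le> m" for i using that by auto
    show ?thesis unfolding has_berge_cycle_def
    proof (intro exI conjI)
      show "inj_on (\<lambda>j. if j<m then Ef j else F) {..<Suc m}"
        using injE Fne by (auto simp: inj_on_def less_Suc_eq)
      show "inj_on (\<lambda>j. if j=0 then w else vs (j mod m)) {..<Suc m}"
      proof (rule inj_onI)
        fix i j assume i: "i \<in> {..<Suc m}" and j: "j \<in> {..<Suc m}"
          and eq: "(if i=0 then w else vs (i mod m)) = (if j=0 then w else vs (j mod m))"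
        show "i = j"
        proof (cases "i = 0")
          case True
          then show ?thesis using eq wnv[OF mod_less_divisor[OF m0, of j]] m0 by (auto split: if_splits)
        next
          case False
          show ?thesis
          proof (cases "j = 0")
            case True then show ?thesis using eq wnv[OF mod_less_divisor[OF m0, of i]] m0 False by (auto split: if_splits)
          next
            case False2: False
            then have "vs (i mod m) = vs (j mod m)" using eq False by simp
            then have "i mod m = j mod m" using injv m0 by simp
            then show ?thesis using modm[of i] modm[of j] i j False False2 by (auto split: if_splits)
          qed
        qed
      qed
      show "\<forall>i<Suc m. (if i<m then Ef i else F) \<in> H \<and>
         (if i=0 then w else vs (i mod m)) \<in> (if i<m then Ef i else F) \<and>
         (if (i+1) mod Suc m = 0 then w else vs ((i+1) mod Suc m mod m)) \<in> (if i<m then Ef i else F)"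
      proof (intro allI impI)
        fix i assume i: "i < Suc m"
        show "(if i<m then Ef i else F) \<in> H \<and>
         (if i=0 then w else vs (i mod m)) \<in> (if i<m then Ef i else F) \<and>
         (if (i+1) mod Suc m = 0 then w else vs ((i+1) mod Suc m mod m)) \<in> (if i<m then Ef i else F)"
        proof (cases "i < m")
          case True
          have "(i+1) mod Suc m = i+1" using True by simp
          moreover have "vs ((i+1) mod m) \<in> Ef i" using vin(2)[OF True] nx_def by simp
          ultimately show ?thesis using True vin[OF True] wE0 by auto
        next
          case False
          then have "i = m" using i by simp
          then show ?thesis using FH m0 by simp
        qed
      qed
    qed
  next
    assume c: "3 \<le> codeg H w (vs 1)"
    define S where "S = {E\<in>H. w\<in>E \<and> vs 1 \<in> E}"
    have cS: "3 \<le> card S" using c unfolding S_def codeg_def by simp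
    have m1: "1 < m" using m4 by simp
    have sub: "\<And>j. j < m \<Longrightarrow> Ef j \<in> S \<Longrightarrow> j = 0 \<or> j = 1"
    proof -
      fix j assume j: "j<m" and "Ef j \<in> S"
      then have "vs 1 \<in> {vs j, vs (nx j), wf j}" using E2[OF j] S_def by auto
      then have "vs 1 = vs j \<or> vs 1 = vs (nx j)" using notw[OF m1 j] by auto
      then have "j = 1 \<or> nx j = 1" using injv j m1 nxlt by metis
      then show "j = 0 \<or> j = 1" using nxe[OF j] by (auto split: if_splits)
    qed
    obtain F where F: "F \<in> S" "F \<notin> Ef ` {..<m}"
    proof (rule ccontr)
      assume "\<not> thesis"
      then have "S \<subseteq> {Ef 0, Ef 1}" using sub that by blast
      then have "card S \<le> card {Ef 0, Ef 1}" by (intro card_mono) auto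
      also have "\<dots> \<le> 2" by (auto simp: card_insert_if)
      finally show False using cS by simp
    qed
    have FH: "F \<in> H" "w \<in> F" "vs 1 \<in> F" using F S_def by auto
    have Fne: "Ef j \<noteq> F" if "j<m" for j using F(2) that by auto
    show ?thesis unfolding has_berge_cycle_def
    proof (intro exI conjI)
      show "inj_on (\<lambda>j. if j=0 then Ef 0 else if j = 1 then F else Ef (j-1)) {..<Suc m}"
        using inj_ins1[OF injE F(2) m0] .
      have "w \<notin> vs ` {..<m}" using wnv by auto
      then show "inj_on (\<lambda>j. if j=0 then vs 0 else if j = 1 then w else vs (j-1)) {..<Suc m}"
        using inj_ins1[OF inj _ m0] by blast
      show "\<forall>i<Suc m. (if i=0 then Ef 0 else if i = 1 then F else Ef (i-1)) \<in> H \<and>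
         (if i=0 then vs 0 else if i = 1 then w else vs (i-1)) \<in> (if i=0 then Ef 0 else if i = 1 then F else Ef (i-1)) \<and>
         (\<lambda>j. if j=0 then vs 0 else if j = 1 then w else vs (j-1)) ((i+1) mod Suc m) \<in> (if i=0 then Ef 0 else if i = 1 then F else Ef (i-1))"
      proof (intro allI impI)
        fix i assume i: "i < Suc m"
        show "(if i=0 then Ef 0 else if i = 1 then F else Ef (i-1)) \<in> H \<and>
         (if i=0 then vs 0 else if i = 1 then w else vs (i-1)) \<in> (if i=0 then Ef 0 else if i = 1 then F else Ef (i-1)) \<and>
         (\<lambda>j. if j=0 then vs 0 else if j = 1 then w else vs (j-1)) ((i+1) mod Suc m) \<in> (if i=0 then Ef 0 else if i = 1 then F else Ef (i-1))"
        proof (cases "i = 0")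
          case True
          then show ?thesis using vin[OF m0] wE0 m4 by simp
        next
          case f0: False
          show ?thesis
          proof (cases "i = 1")
            case True
            then show ?thesis using FH m4 by simp
          next
            case f1: False
            have i1: "i - 1 < m" using i f0 by simp
            have nxi: "nx (i-1) = (if i = m then 0 else i)" using nxe[OF i1] f0 by auto
            show ?thesis
            proof (cases "i = m")
              case True
              then show ?thesis using f0 f1 vin[OF i1] nxi by simp
            next
              case False
              then have "(i+1) mod Suc m = i+1" using i by simp
              then show ?thesis using f0 f1 vin[OF i1] nxi False by simp
            qed
          qed
        qed
      qed
    qed
  qed
  then show False using NB m_def by simp
qed


theorem mainTheorem8:
  fixes V V1 V2 :: "'a set" and H H4 :: "'a set set" and k :: nat
  assumes "2 \<le> k"
    and "uniform3_hypergraph V H"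
    and "\<not> has_berge_cycle H (2 * k + 1)"
    and "V = V1 \<union> V2" and "V1 \<inter> V2 = {}"
    and "H4 \<subseteq> H"
    and "\<forall>E\<in>H4. \<exists>u v w. E = {u, v, w} \<and>
           ((u \<in> V1 \<and> v \<in> V1 \<and> w \<in> V2) \<or> (u \<in> V2 \<and> v \<in> V2 \<and> w \<in> V1)) \<and>
           {E'\<in>H. u \<in> E' \<and> v \<in> E'} = {E} \<and>
           max (codeg H w u) (codeg H w v) \<ge> 3"
  shows "\<not> has_cycle {e. \<exists>E\<in>H4. (e = E \<inter> V1 \<or> e = E \<inter> V2) \<and> card e = 2} (2 * k)
         \<and> card H4 \<le> ex_cycle (card V) (2 * k)"
proof -
  define G where "G = {e. \<exists>E\<in>H4. (e = E \<inter> V1 \<or> e = E \<inter> V2) \<and> card e = 2}"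
  have nc: "\<not> has_cycle G (2*k)"
  proof
    assume "has_cycle G (2*k)"
    then obtain vs where inj: "inj_on vs {..<2*k}" and cyc: "\<forall>i<2*k. {vs i, vs ((i+1) mod (2*k))} \<in> G"
      unfolding has_cycle_def by blast
    have "0 < 2*k" using assms(1) by simp
    then have "{vs 0, vs ((0+1) mod (2*k))} \<in> G" using cyc by blast
    then obtain E where "E\<in>H4" "{vs 0, vs ((0+1) mod (2*k))} = E\<inter>V1 \<or> {vs 0, vs ((0+1) mod (2*k))} = E\<inter>V2"
      unfolding G_def by blast
    then have "vs 0 \<in> V1 \<or> vs 0 \<in> V2" by blast
    then show False
    proof
      assume v1: "vs 0 \<in> V1"
      from cyc have cycG: "\<forall>i<2*k. {vs i, vs ((i+1) mod (2*k))} \<in> {e. \<exists>E\<in>H4. (e = E \<inter> V1 \<or> e = E \<inter> V2) \<and> card e = 2}"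
        unfolding G_def .
      show False by (rule core[OF assms(1,2,3,5,6,7) inj cycG v1])
    next
      assume v0: "vs 0 \<in> V2"
      have D': "V2 \<inter> V1 = {}" using assms(5) by blast
      have hyp': "\<forall>E\<in>H4. \<exists>u v w. E = {u, v, w} \<and>
           ((u \<in> V2 \<and> v \<in> V2 \<and> w \<in> V1) \<or> (u \<in> V1 \<and> v \<in> V1 \<and> w \<in> V2)) \<and>
           {E'\<in>H. u \<in> E' \<and> v \<in> E'} = {E} \<and>
           max (codeg H w u) (codeg H w v) \<ge> 3"
      proof
        fix E assume "E \<in> H4"
        from bspec[OF assms(7) this] obtain u v w where
          a: "E = {u, v, w}" "((u \<in> V1 \<and> v \<in> V1 \<and> w \<in> V2) \<or> (u \<in> V2 \<and> v \<in> V2 \<and> w \<in> V1))"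
           "{E'\<in>H. u \<in> E' \<and> v \<in> E'} = {E}" "max (codeg H w u) (codeg H w v) \<ge> 3" by iprover
        have b: "((u \<in> V2 \<and> v \<in> V2 \<and> w \<in> V1) \<or> (u \<in> V1 \<and> v \<in> V1 \<and> w \<in> V2))" using a(2) by blast
        show "\<exists>u v w. E = {u, v, w} \<and>
           ((u \<in> V2 \<and> v \<in> V2 \<and> w \<in> V1) \<or> (u \<in> V1 \<and> v \<in> V1 \<and> w \<in> V2)) \<and>
           {E'\<in>H. u \<in> E' \<and> v \<in> E'} = {E} \<and>
           max (codeg H w u) (codeg H w v) \<ge> 3"
          by (rule exI[of _ u], rule exI[of _ v], rule exI[of _ w]) (intro conjI a(1) b a(3) a(4))
      qed
      have GG: "G = {e. \<exists>E\<in>H4. (e = E \<inter> V2 \<or> e = E \<inter> V1) \<and> card e = 2}" unfolding G_def by blast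
      have cyc': "\<forall>i<2*k. {vs i, vs ((i+1) mod (2*k))} \<in> {e. \<exists>E\<in>H4. (e = E \<inter> V2 \<or> e = E \<inter> V1) \<and> card e = 2}"
        using cyc GG by simp
      show False using core[OF assms(1,2,3) D' assms(6) hyp' inj cyc' v0] .
    qed
  qed
  have fin: "finite V" using assms(2) unfolding uniform3_hypergraph_def by blast
  have EV: "E \<subseteq> V" if "E \<in> H" for E using assms(2) that unfolding uniform3_hypergraph_def by blast
  have c3: "card E = 3" if "E \<in> H" for E using assms(2) that unfolding uniform3_hypergraph_def by blast
  obtain f where bij: "bij_betw f V {0..<card V}" using ex_bij_betw_finite_nat[OF fin] by blast
  have injf: "inj_on f V" and fV: "f ` V = {0..<card V}" using bij unfolding bij_betw_def by auto
  have GV: "e \<subseteq> V" if "e \<in> G" for e using that EV assms(6) unfolding G_def by blast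
  have finG: "finite G" using GV fin by (meson PowI finite_Pow_iff rev_finite_subset subsetI)
  define G' where "G' = (\<lambda>e. f ` e) ` G"
  have injI: "inj_on (\<lambda>e. f ` e) G" using inj_on_image_eq_iff[OF injf] GV by (auto simp: inj_on_def)
  have cG': "card G' = card G" unfolding G'_def using card_image[OF injI] .
  have simpG': "G' \<in> simple_graphs_on (card V)"
    unfolding simple_graphs_on_def
  proof (rule CollectI, rule ballI)
    fix e' assume "e' \<in> G'"
    then obtain e where e: "e \<in> G" "e' = f ` e" unfolding G'_def by blast
    have "card e = 2" using e(1) unfolding G_def by blast
    moreover have "card (f ` e) = card e" using card_image inj_on_subset[OF injf GV[OF e(1)]] by blast
    moreover have "f ` e \<subseteq> {..<card V}" using image_mono[OF GV[OF e(1)], of f] fV by auto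
    ultimately show "e' \<subseteq> {..<card V} \<and> card e' = 2" using e by simp
  qed
  have ncG': "\<not> has_cycle G' (2*k)"
  proof
    assume "has_cycle G' (2*k)"
    then obtain vs where inj: "inj_on vs {..<2*k}" and cyc: "\<forall>i<2*k. {vs i, vs ((i+1) mod (2*k))} \<in> G'"
      and m3: "3 \<le> 2*k" unfolding has_cycle_def by blast
    define g where "g = inv_into V f"
    have edge: "{g (vs i), g (vs ((i+1) mod (2*k)))} \<in> G \<and> vs i \<in> f ` V" if i: "i < 2*k" for i
    proof -
      obtain e where e: "e \<in> G" "{vs i, vs ((i+1) mod (2*k))} = f ` e" using cyc i unfolding G'_def by blast
      have "g ` (f ` e) = e" unfolding g_def using inv_into_image_cancel[OF injf GV[OF e(1)]] .
      then have "{g (vs i), g (vs ((i+1) mod (2*k)))} = e" using e(2) by (metis image_empty image_insert)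
      moreover have "vs i \<in> f ` V" using e(2) GV[OF e(1)] by blast
      ultimately show ?thesis using e(1) by simp
    qed
    have "inj_on (g \<circ> vs) {..<2*k}"
    proof (rule comp_inj_on[OF inj])
      have "vs ` {..<2*k} \<subseteq> f ` V" using edge by blast
      then show "inj_on g (vs ` {..<2*k})" unfolding g_def by (rule inj_on_inv_into)
    qed
    then have "has_cycle G (2*k)" unfolding has_cycle_def using m3 edge
      by (intro conjI exI[of _ "g \<circ> vs"]) auto
    then show False using nc by simp
  qed
  define phi where "phi E = (if card (E \<inter> V1) = 2 then E \<inter> V1 else E \<inter> V2)" for E
  have phiI: "\<exists>u v. phi E = {u,v} \<and> phi E \<in> G \<and> phi E \<subseteq> E \<and> {E'\<in>H. u \<in> E' \<and> v \<in> E'} = {E}" if E: "E \<in> H4" for E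
  proof -
    from bspec[OF assms(7) E] obtain u v w where
      a: "E = {u, v, w}" "((u \<in> V1 \<and> v \<in> V1 \<and> w \<in> V2) \<or> (u \<in> V2 \<and> v \<in> V2 \<and> w \<in> V1))"
        "{E'\<in>H. u \<in> E' \<and> v \<in> E'} = {E}" by iprover
    have EH: "E \<in> H" using assms(6) E by blast
    have "card {u,v,w} = 3" using c3[OF EH] a(1) by simp
    then have uv: "u \<noteq> v" by (auto simp: card_insert_if split: if_splits)
    have c2: "card {u,v} = 2" using uv by simp
    have "phi E = {u,v}"
    proof (cases "u \<in> V1 \<and> v \<in> V1 \<and> w \<in> V2")
      case True
      then have "E \<inter> V1 = {u,v}" using a(1) assms(5) by auto
      then show ?thesis unfolding phi_def using c2 by simp
    next
      case False
      then have h: "u \<in> V2 \<and> v \<in> V2 \<and> w \<in> V1" using a(2) by blast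
      then have "E \<inter> V1 = {w}" using a(1) assms(5) by auto
      moreover have "E \<inter> V2 = {u,v}" using h a(1) assms(5) by auto
      ultimately show ?thesis unfolding phi_def by simp
    qed
    note p1 = this
    have pe: "phi E = E\<inter>V1 \<or> phi E = E\<inter>V2" unfolding phi_def by simp
    have pc: "card (phi E) = 2" using p1 c2 by simp
    have p2: "phi E \<in> G" unfolding G_def mem_Collect_eq by (intro bexI[of _ E] conjI pe pc E)
    have p3: "phi E \<subseteq> E" unfolding phi_def by auto
    show ?thesis by (intro exI[of _ u] exI[of _ v] conjI p1 p2 p3 a(3))
  qed
  have injphi: "inj_on phi H4"
  proof (rule inj_onI)
    fix E1 E2 assume E1: "E1 \<in> H4" and E2: "E2 \<in> H4" and eq: "phi E1 = phi E2"
    from phiI[OF E1] obtain u v where uv: "phi E1 = {u,v}" "{E'\<in>H. u \<in> E' \<and> v \<in> E'} = {E1}" by blast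
    have "phi E2 \<subseteq> E2" using phiI[OF E2] by blast
    then have "u \<in> E2 \<and> v \<in> E2" using eq uv(1) by blast
    then have "E2 \<in> {E'\<in>H. u \<in> E' \<and> v \<in> E'}" using E2 assms(6) by blast
    then show "E1 = E2" using uv(2) by blast
  qed
  have "phi ` H4 \<subseteq> G" using phiI by blast
  then have cH4: "card H4 \<le> card G" using card_inj_on_le[OF injphi _ finG] by blast
  define S where "S = {Gr \<in> simple_graphs_on (card V). \<not> has_cycle Gr (2*k)}"
  have "simple_graphs_on (card V) \<subseteq> Pow (Pow {..<card V})" unfolding simple_graphs_on_def by blast
  then have SP: "S \<subseteq> Pow (Pow {..<card V})" unfolding S_def by blast
  have fP: "finite (Pow (Pow {..<card V}))" by simp
  have "finite S" using finite_subset[OF SP fP] .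
  moreover have "G' \<in> S" unfolding S_def using simpG' ncG' by blast
  ultimately have "card G' \<le> ex_cycle (card V) (2*k)" unfolding ex_cycle_def S_def[symmetric]
    by (intro Max_ge) auto
  then show ?thesis using nc cH4 cG' unfolding G_def by simp
qed

end
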